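(* Let $V$ be a valuation domain. (1) If $P$ is a branched prime ideal of $V$ and $Q$ is the prime ideal of $V$ directly below $P$ (i.e. $Q\subsetneq P$ with no prime ideal strictly between them), then the closure of $\mathcal P(P)$ in the constructible topology of $\mathcal I(V)$ is $\mathcal P(P)\cup\{Q\}$. (2) The set $\mathcal P_V$ of all primary ideals of $V$ is proconstructible in $\mathcal I(V)$.
   Context: A prime ideal $\mathfrak p$ is branched if there exists a $\mathfrak p$-primary ideal distinct from $\mathfrak p$ (for a branched prime of a valuation domain, the prime directly below it exists). $\mathcal P(P)$ denotes the set of $P$-primary ideals. $\mathcal I(V)$ is the set of ideals of $V$ with the Zariski topology having basis of open sets $\mathcal B(x_1,\ldots,x_n):=\{I\mid x_1,\ldots,x_n\in I\}$; it is spectral. The constructible topology is the coarsest topology in which all open quasi-compact subsets are clopen; proconstructible means closed in the constructible topology. *)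

theory Defs
  imports "HOL-Analysis.Analysis"
begin

text \<open>A valuation domain: an integral domain whose ideals (equivalently principal ideals)
  are totally ordered, i.e. for all a, b: a divides b or b divides a.\<close>
definition valuation_domain :: "'a::idom itself \<Rightarrow> bool" where
  "valuation_domain _ \<longleftrightarrow> (\<forall>a b :: 'a. a dvd b \<or> b dvd a)"

definition ring_ideal :: "'a::comm_ring_1 set \<Rightarrow> bool" where
  "ring_ideal I \<longleftrightarrow> 0 \<in> I \<and> (\<forall>x\<in>I. \<forall>y\<in>I. x + y \<in> I) \<and> (\<forall>r. \<forall>x\<in>I. r * x \<in> I)"

definition ideal_radical :: "'a::comm_ring_1 set \<Rightarrow> 'a set" where
  "ideal_radical I = {x. \<exists>n::nat. x ^ n \<in> I}"

definition prime_ideal :: "'a::comm_ring_1 set \<Rightarrow> bool" where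
  "prime_ideal P \<longleftrightarrow> ring_ideal P \<and> P \<noteq> UNIV \<and> (\<forall>a b. a * b \<in> P \<longrightarrow> a \<in> P \<or> b \<in> P)"

definition primary_ideal :: "'a::comm_ring_1 set \<Rightarrow> bool" where
  "primary_ideal I \<longleftrightarrow> ring_ideal I \<and> I \<noteq> UNIV \<and>
     (\<forall>a b. a * b \<in> I \<longrightarrow> a \<notin> I \<longrightarrow> (\<exists>n::nat. b ^ n \<in> I))"

definition primary_ideals_of :: "'a::comm_ring_1 set \<Rightarrow> 'a set set" where
  "primary_ideals_of P = {I. primary_ideal I \<and> ideal_radical I = P}"

definition branched_prime :: "'a::comm_ring_1 set \<Rightarrow> bool" where
  "branched_prime P \<longleftrightarrow> prime_ideal P \<and> (\<exists>I\<in>primary_ideals_of P. I \<noteq> P)"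

definition all_ideals :: "'a::comm_ring_1 set set" where
  "all_ideals = {I. ring_ideal I}"

definition ideal_zariski :: "'a::comm_ring_1 set topology" where
  "ideal_zariski = topology_generated_by {{I \<in> all_ideals. F \<subseteq> I} | F. finite F}"

text \<open>Constructible topology: coarsest topology (on the same space) in which all open
  quasi-compact subsets are clopen, i.e. generated by the open quasi-compact sets and
  their complements.\<close>
definition constructible_topology :: "'a topology \<Rightarrow> 'a topology" where
  "constructible_topology X = topology_generated_by
     ({U. openin X U \<and> compactin X U} \<union> {topspace X - U | U. openin X U \<and> compactin X U})"

end

theory Submission
  imports Defs
begin


lemma vd_dvd: "valuation_domain TYPE('a::idom) \<Longrightarrow> (a::'a) dvd b \<or> b dvd a"
  unfolding valuation_domain_def by blast

lemma ideal_0: "ring_ideal I \<Longrightarrow> 0 \<in> I" unfolding ring_ideal_def by blast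
lemma ideal_add: "ring_ideal I \<Longrightarrow> x \<in> I \<Longrightarrow> y \<in> I \<Longrightarrow> x + y \<in> I" unfolding ring_ideal_def by blast
lemma ideal_multL: "ring_ideal I \<Longrightarrow> x \<in> I \<Longrightarrow> r * x \<in> I" unfolding ring_ideal_def by blast
lemma ideal_multR: "ring_ideal I \<Longrightarrow> x \<in> I \<Longrightarrow> x * r \<in> I"
  using ideal_multL[of I x r] by (simp add: mult.commute)
lemma ideal_dvd: "ring_ideal I \<Longrightarrow> x \<in> I \<Longrightarrow> x dvd y \<Longrightarrow> y \<in> I"
  by (auto elim!: dvdE intro: ideal_multR)
lemma ideal_one: "ring_ideal I \<Longrightarrow> 1 \<in> I \<Longrightarrow> I = UNIV"
  using ideal_dvd[OF _ _ one_dvd] by blast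

lemma ideals_total:
  assumes "valuation_domain TYPE('a::idom)" "ring_ideal (I::'a set)" "ring_ideal J"
  shows "I \<subseteq> J \<or> J \<subseteq> I"
proof (rule ccontr)
  assume "\<not> ?thesis"
  then obtain a b where "a \<in> I" "a \<notin> J" "b \<in> J" "b \<notin> I" by blast
  then show False using vd_dvd[OF assms(1), of a b] ideal_dvd assms by blast
qed

lemma prime_pow: "prime_ideal P \<Longrightarrow> x ^ n \<in> P \<Longrightarrow> x \<in> P"
proof (induction n)
  case 0 then show ?case unfolding prime_ideal_def using ideal_one by auto
next
  case (Suc n) then show ?case unfolding prime_ideal_def by auto
qed

lemma subset_rad: "I \<subseteq> ideal_radical I"
  unfolding ideal_radical_def by (auto intro: exI[of _ 1])

lemma prime_rad: "prime_ideal P \<Longrightarrow> ideal_radical P = P"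
  using subset_rad prime_pow unfolding ideal_radical_def by blast

lemma prime_primary: "prime_ideal P \<Longrightarrow> primary_ideal P"
  unfolding prime_ideal_def primary_ideal_def by (metis power_one_right)

lemma rad_prime:
  assumes vd: "valuation_domain TYPE('a::idom)" and J: "ring_ideal (J::'a set)" and ne: "J \<noteq> UNIV"
  shows "prime_ideal (ideal_radical J)"
proof -
  have add: "x + y \<in> ideal_radical J" if "x \<in> ideal_radical J" "y \<in> ideal_radical J" "x dvd y" for x y
  proof -
    from that obtain n where n: "x ^ n \<in> J" unfolding ideal_radical_def by blast
    from that obtain c where c: "y = x * c" by blast
    have e1: "x + y = x * (1 + c)" using c by (simp add: distrib_left)
    have "(x + y) ^ n = x ^ n * (1 + c) ^ n" unfolding e1 by (rule power_mult_distrib)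
    then have "(x + y) ^ n \<in> J" using ideal_multR[OF J n] by simp
    then show ?thesis unfolding ideal_radical_def by blast
  qed
  have I: "ring_ideal (ideal_radical J)"
    unfolding ring_ideal_def
  proof (intro conjI ballI allI)
    show "0 \<in> ideal_radical J" using ideal_0[OF J] unfolding ideal_radical_def by (auto intro: exI[of _ 1])
  next
    fix x y assume "x \<in> ideal_radical J" "y \<in> ideal_radical J"
    then show "x + y \<in> ideal_radical J" using add vd_dvd[OF vd, of x y] by (metis add.commute)
  next
    fix r x assume "x \<in> ideal_radical J"
    then obtain n where "x ^ n \<in> J" unfolding ideal_radical_def by blast
    then have "(r * x) ^ n \<in> J" using ideal_multL[OF J] by (simp add: power_mult_distrib)
    then show "r * x \<in> ideal_radical J" unfolding ideal_radical_def by blast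
  qed
  have N: "1 \<notin> ideal_radical J" using ideal_one[OF J] ne unfolding ideal_radical_def by auto
  have P: "a \<in> ideal_radical J \<or> b \<in> ideal_radical J" if ab: "a * b \<in> ideal_radical J" and d: "a dvd b" for a b
  proof -
    from ab obtain n where n: "(a*b) ^ n \<in> J" unfolding ideal_radical_def by blast
    from d obtain c where c: "b = a * c" by blast
    have e2: "b * b = (a * b) * c" using c by (simp add: mult_ac)
    have e3: "b ^ (2*n) = (b * b) ^ n" by (simp add: power_mult power2_eq_square)
    have "b ^ (2*n) = (a*b)^n * c ^ n" unfolding e3 e2 by (rule power_mult_distrib)
    then have "b ^ (2*n) \<in> J" using ideal_multR[OF J n] by simp
    then show ?thesis unfolding ideal_radical_def by blast
  qed
  show ?thesis unfolding prime_ideal_def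
  proof (intro conjI allI impI)
    show "ring_ideal (ideal_radical J)" by (rule I)
    show "ideal_radical J \<noteq> UNIV" using N by blast
  next
    fix a b assume ab: "a * b \<in> ideal_radical J"
    show "a \<in> ideal_radical J \<or> b \<in> ideal_radical J"
    proof (cases "a dvd b")
      case True then show ?thesis using P ab by blast
    next
      case False then have "b dvd a" using vd_dvd[OF vd] by blast
      moreover have "b * a \<in> ideal_radical J" using ab by (simp add: mult.commute)
      ultimately show ?thesis using P by blast
    qed
  qed
qed

lemma primary_contains_Q:
  assumes vd: "valuation_domain TYPE('a::idom)" and Q: "prime_ideal (Q::'a set)" and QP: "Q \<subset> P"
    and I: "I \<in> primary_ideals_of P"
  shows "Q \<subseteq> I"
proof
  fix q assume q: "q \<in> Q"
  obtain p where p: "p \<in> P" "p \<notin> Q" using QP by blast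
  have Iid: "ring_ideal I" using I unfolding primary_ideals_of_def primary_ideal_def by blast
  have "p \<in> ideal_radical I" using I p unfolding primary_ideals_of_def by blast
  then obtain n where n: "p ^ n \<in> I" unfolding ideal_radical_def by blast
  have pn: "p ^ n \<notin> Q" using prime_pow[OF Q] p by blast
  have Qid: "ring_ideal Q" using Q unfolding prime_ideal_def by blast
  show "q \<in> I"
  proof (cases "p ^ n dvd q")
    case True then show ?thesis using ideal_dvd[OF Iid n] by blast
  next
    case False then have "q dvd p ^ n" using vd_dvd[OF vd] by blast
    then show ?thesis using ideal_dvd[OF Qid q] pn by blast
  qed
qed

lemma primary_avoiding:
  assumes vd: "valuation_domain TYPE('a::idom)" and P: "prime_ideal (P::'a set)"
    and Q: "prime_ideal Q" and QP: "Q \<subset> P"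
    and nomid: "\<not> (\<exists>R. prime_ideal R \<and> Q \<subset> R \<and> R \<subset> P)"
    and y: "y \<notin> Q"
  shows "\<exists>I \<in> primary_ideals_of P. y \<notin> I"
proof (cases "y \<in> P")
  case False
  have "P \<in> primary_ideals_of P" unfolding primary_ideals_of_def
    using prime_primary[OF P] prime_rad[OF P] by simp
  then show ?thesis using False by (rule bexI[rotated])
next
  case yP: True
  have Pid: "ring_ideal P" using P unfolding prime_ideal_def by simp
  have P1: "1 \<notin> P" using P ideal_one unfolding prime_ideal_def by auto
  have Pm: "\<And>a b. a * b \<in> P \<Longrightarrow> a \<in> P \<or> b \<in> P" using P unfolding prime_ideal_def by simp
  have Qid: "ring_ideal Q" using Q unfolding prime_ideal_def by blast
  have y0: "y \<noteq> 0" using y ideal_0[OF Qid] by blast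
  define Y where "Y = {z. y * y dvd z}"
  have Yid: "ring_ideal Y" unfolding Y_def ring_ideal_def by auto
  have yyP: "y * y \<in> P" using ideal_multL[OF Pid yP] .
  have YP: "Y \<subseteq> P" unfolding Y_def using ideal_dvd[OF Pid yyP] by blast
  have YU: "Y \<noteq> UNIV" using YP P1 by blast
  define R where "R = ideal_radical Y"
  have R: "prime_ideal R" unfolding R_def by (rule rad_prime[OF vd Yid YU])
  have Rid: "ring_ideal R" using R unfolding prime_ideal_def by blast
  have yR: "y \<in> R" unfolding R_def ideal_radical_def Y_def
    by (auto intro!: exI[of _ 2] simp: power2_eq_square)
  have QR: "Q \<subset> R" using ideals_total[OF vd Qid Rid] yR y by blast
  have RP: "R \<subseteq> P" unfolding R_def ideal_radical_def using YP prime_pow[OF P] by blast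
  have RP': "R = P" using nomid R QR RP by blast
  have pw: "\<exists>n. y * y dvd b ^ n" if "b \<in> P" for b
  proof -
    have "b \<in> R" using that RP' by simp
    then show ?thesis unfolding R_def ideal_radical_def Y_def by simp
  qed
  define I where "I = {z. \<exists>s. s \<notin> P \<and> y * y dvd z * s}"
  have Iid: "ring_ideal I" unfolding ring_ideal_def
  proof (intro conjI ballI allI)
    show "0 \<in> I" unfolding I_def using P1 by auto
  next
    fix a b assume "a \<in> I" "b \<in> I"
    obtain s where s: "s \<notin> P" "y * y dvd a * s" using \<open>a \<in> I\<close> unfolding I_def by auto
    obtain t where t: "t \<notin> P" "y * y dvd b * t" using \<open>b \<in> I\<close> unfolding I_def by auto
    have "s * t \<notin> P" using s t Pm by blast
    moreover have "y * y dvd (a + b) * (s * t)"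
    proof -
      have "(a + b) * (s * t) = (a * s) * t + (b * t) * s" by (simp add: algebra_simps)
      then show ?thesis using s t by (simp add: dvd_add dvd_mult2)
    qed
    ultimately show "a + b \<in> I" unfolding I_def by blast
  next
    fix r a assume "a \<in> I"
    then obtain s where s: "s \<notin> P" "y * y dvd a * s" unfolding I_def by blast
    have "y * y dvd (r * a) * s" using s by (metis dvd_mult mult.assoc)
    then show "r * a \<in> I" unfolding I_def using s by blast
  qed
  have YI: "Y \<subseteq> I" unfolding Y_def I_def using P1 by (auto intro!: exI[of _ 1])
  have IP: "I \<subseteq> P"
  proof
    fix z assume "z \<in> I"
    then obtain s where s: "s \<notin> P" "y * y dvd z * s" unfolding I_def by blast
    then have "z * s \<in> P" using ideal_dvd[OF Pid yyP] by blast
    then show "z \<in> P" using Pm s by blast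
  qed
  have radI: "ideal_radical I = P"
  proof
    show "ideal_radical I \<subseteq> P" unfolding ideal_radical_def using IP prime_pow[OF P] by blast
  next
    show "P \<subseteq> ideal_radical I"
    proof
      fix b assume "b \<in> P"
      then obtain n where "y * y dvd b ^ n" using pw by blast
      then have "b ^ n \<in> I" using YI unfolding Y_def by blast
      then show "b \<in> ideal_radical I" unfolding ideal_radical_def by blast
    qed
  qed
  have prim: "primary_ideal I" unfolding primary_ideal_def
  proof (intro conjI allI impI)
    show "ring_ideal I" by (rule Iid)
    show "I \<noteq> UNIV" using IP P1 by blast
  next
    fix a b assume ab: "a * b \<in> I" and a: "a \<notin> I"
    have "b \<in> P"
    proof (rule ccontr)
      assume b: "b \<notin> P"
      from ab obtain s where s: "s \<notin> P" "y * y dvd a * b * s" unfolding I_def by blast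
      have "b * s \<notin> P" using b s Pm by blast
      moreover have "y * y dvd a * (b * s)" using s by (simp add: mult.assoc)
      ultimately have "a \<in> I" unfolding I_def by blast
      then show False using a by blast
    qed
    then show "\<exists>n. b ^ n \<in> I" using radI unfolding ideal_radical_def by blast
  qed
  have yI: "y \<notin> I"
  proof
    assume "y \<in> I"
    then obtain s where s: "s \<notin> P" "y * y dvd y * s" unfolding I_def by blast
    then have "y dvd s" using y0 by simp
    then have "s \<in> P" using ideal_dvd[OF Pid yP] by blast
    then show False using s by blast
  qed
  show ?thesis using prim radI yI unfolding primary_ideals_of_def by blast
qed

lemma nonprimary_nbhd:
  assumes vd: "valuation_domain TYPE('a::idom)" and J: "ring_ideal (J::'a set)" and JU: "J \<noteq> UNIV"
    and np: "\<not> primary_ideal J"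
  shows "\<exists>a b. a * b \<in> J \<and> a \<notin> J \<and> (\<forall>I. primary_ideal I \<longrightarrow> a * b \<in> I \<longrightarrow> a \<in> I)"
proof -
  have "\<not> (\<forall>a b. a * b \<in> J \<longrightarrow> a \<notin> J \<longrightarrow> (\<exists>n::nat. b ^ n \<in> J))"
    using np J JU unfolding primary_ideal_def by simp
  then obtain a b where ab: "a * b \<in> J" and a: "a \<notin> J" and bn0: "\<forall>n. b ^ n \<notin> J" by auto
  have bn: "\<And>n. b ^ n \<notin> J" using bn0 by simp
  have aa: "a * a \<in> J"
  proof (cases "a dvd b")
    case True
    then obtain c where "b = a * c" by blast
    then have "b ^ 2 = (a * b) * c" by (simp add: power2_eq_square algebra_simps)
    then have "b ^ 2 \<in> J" using ideal_multR[OF J ab] by simp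
    then show ?thesis using bn by blast
  next
    case False
    then have "b dvd a" using vd_dvd[OF vd] by blast
    then obtain c where c: "a = b * c" by blast
    have e: "a * a = (a * b) * c" by (subst (2) c) (simp add: mult.assoc)
    show ?thesis unfolding e by (rule ideal_multR[OF J ab])
  qed
  have "a * b \<in> I \<longrightarrow> a \<in> I" if I: "primary_ideal I" for I
  proof
    assume abI: "a * b \<in> I"
    have Iid: "ring_ideal I" using I unfolding primary_ideal_def by blast
    show "a \<in> I"
    proof (rule ccontr)
      assume aI: "a \<notin> I"
      then obtain n where n: "b ^ n \<in> I" using I abI unfolding primary_ideal_def by blast
      show False
      proof (cases "b ^ n dvd a")
        case True then show False using ideal_dvd[OF Iid n] aI by blast
      next
        case False
        then have "a dvd b ^ n" using vd_dvd[OF vd] by blast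
        then obtain c where c: "b ^ n = a * c" by blast
        have e4: "b ^ (2 * n) = b ^ n * b ^ n" by (simp add: mult_2 power_add)
        have "b ^ (2 * n) = (a * a) * (c * c)" unfolding e4 c by (simp add: mult_ac)
        then have "b ^ (2 * n) \<in> J" using ideal_multR[OF J aa] by simp
        then show False using bn by blast
      qed
    qed
  qed
  then show ?thesis using ab a by blast
qed




lemma Z_open: "openin ideal_zariski U \<longleftrightarrow>
   generate_topology_on {{I \<in> all_ideals. F \<subseteq> I} | F. finite F} U"
  unfolding ideal_zariski_def by (rule openin_topology_generated_by_iff)

lemma Z_topspace: "topspace ideal_zariski = all_ideals"
proof -
  have a: "all_ideals \<in> {{I \<in> all_ideals. F \<subseteq> I} | F. finite F}"
    by (rule CollectI, rule exI[of _ "{}"]) simp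
  have b: "\<Union>{{I \<in> all_ideals. F \<subseteq> I} | F. finite F} \<subseteq> all_ideals" by blast
  show ?thesis unfolding ideal_zariski_def topology_generated_by_topspace using a b by blast
qed

lemma Z_basic: "finite F \<Longrightarrow> openin ideal_zariski {I \<in> all_ideals. F \<subseteq> I}"
  unfolding ideal_zariski_def by (rule topology_generated_by_Basis) blast

lemma Z_local:
  assumes "openin ideal_zariski U" "I \<in> U"
  shows "\<exists>F. finite F \<and> F \<subseteq> I \<and> {J \<in> all_ideals. F \<subseteq> J} \<subseteq> U"
proof -
  have "generate_topology_on {{I \<in> all_ideals. F \<subseteq> I} | F. finite F} U" using assms(1) Z_open by blast
  then show ?thesis using assms(2)
  proof (induction arbitrary: I)
    case Empty then show ?case by simp
  next
    case (Int a b)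
    have Ia: "I \<in> a" and Ib: "I \<in> b" using Int.prems by auto
    obtain F1 where F1: "finite F1" "F1 \<subseteq> I" "{J \<in> all_ideals. F1 \<subseteq> J} \<subseteq> a"
      using Int.IH(1)[OF Ia] by (elim exE conjE)
    obtain F2 where F2: "finite F2" "F2 \<subseteq> I" "{J \<in> all_ideals. F2 \<subseteq> J} \<subseteq> b"
      using Int.IH(2)[OF Ib] by (elim exE conjE)
    have "finite (F1 \<union> F2)" "F1 \<union> F2 \<subseteq> I" using F1 F2 by auto
    moreover have "{J \<in> all_ideals. F1 \<union> F2 \<subseteq> J} \<subseteq> a \<inter> b" using F1(3) F2(3) by auto
    ultimately show ?case by blast
  next
    case (UN K)
    then obtain k where k: "k \<in> K" "I \<in> k" by blast
    obtain F where "finite F" "F \<subseteq> I" "{J \<in> all_ideals. F \<subseteq> J} \<subseteq> k"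
      using UN.IH[OF k] by (elim exE conjE)
    then show ?case using k(1) by blast
  next
    case (Basis s)
    then obtain F where "finite F" "s = {J \<in> all_ideals. F \<subseteq> J}" by blast
    then show ?case using Basis.prems by blast
  qed
qed

lemma Z_up: "openin ideal_zariski U \<Longrightarrow> I \<in> U \<Longrightarrow> J \<in> all_ideals \<Longrightarrow> I \<subseteq> J \<Longrightarrow> J \<in> U"
proof -
  assume U: "openin ideal_zariski U" and I: "I \<in> U" and J: "J \<in> all_ideals" and IJ: "I \<subseteq> J"
  obtain F where "finite F" "F \<subseteq> I" "{J \<in> all_ideals. F \<subseteq> J} \<subseteq> U"
    using Z_local[OF U I] by (elim exE conjE)
  then show "J \<in> U" using J IJ by blast
qed

lemma principal_ideal: "ring_ideal {z::'a::comm_ring_1. x dvd z}"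
  unfolding ring_ideal_def by auto

lemma Z_compact: "compactin ideal_zariski {I \<in> all_ideals. (x::'a::comm_ring_1) \<in> I}"
  unfolding compactin_def
proof (intro conjI allI impI)
  show "{I \<in> all_ideals. x \<in> I} \<subseteq> topspace ideal_zariski" using Z_topspace by blast
next
  fix \<U> assume A: "(\<forall>U\<in>\<U>. openin ideal_zariski U) \<and> {I \<in> all_ideals. x \<in> I} \<subseteq> \<Union>\<U>"
  have "{z. x dvd z} \<in> {I \<in> all_ideals. x \<in> I}"
    using principal_ideal[of x] unfolding all_ideals_def by auto
  then obtain U where U: "U \<in> \<U>" "{z. x dvd z} \<in> U" using A by blast
  have "{I \<in> all_ideals. x \<in> I} \<subseteq> U"
  proof
    fix I assume I: "I \<in> {I \<in> all_ideals. x \<in> I}"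
    then have "{z. x dvd z} \<subseteq> I" using ideal_dvd unfolding all_ideals_def by blast
    then show "I \<in> U" using Z_up[of U "{z. x dvd z}" I] U A I by blast
  qed
  then show "\<exists>\<F>. finite \<F> \<and> \<F> \<subseteq> \<U> \<and> {I \<in> all_ideals. x \<in> I} \<subseteq> \<Union>\<F>"
    using U by (intro exI[of _ "{U}"]) auto
qed

lemma Z_B_open: "openin ideal_zariski {I \<in> all_ideals. (x::'a::comm_ring_1) \<in> I}"
  using Z_basic[of "{x}"] by simp

abbreviation Sc :: "'a::comm_ring_1 set set set" where
  "Sc \<equiv> {U. openin ideal_zariski U \<and> compactin ideal_zariski U} \<union>
     {topspace ideal_zariski - U | U. openin ideal_zariski U \<and> compactin ideal_zariski U}"

lemma C_open: "openin (constructible_topology ideal_zariski) T \<longleftrightarrow> generate_topology_on Sc T"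
  unfolding constructible_topology_def by (rule openin_topology_generated_by_iff)

lemma C_topspace: "topspace (constructible_topology (ideal_zariski :: 'a::comm_ring_1 set topology)) = all_ideals"
proof -
  have e: "{I \<in> all_ideals. (0::'a) \<in> I} = all_ideals" using ideal_0 unfolding all_ideals_def by blast
  have "all_ideals \<in> (Sc :: 'a set set set)" using Z_B_open[of "0::'a"] Z_compact[of "0::'a"] unfolding e by blast
  moreover have "X \<subseteq> all_ideals" if X: "X \<in> (Sc :: 'a set set set)" for X
  proof -
    have t: "topspace (ideal_zariski :: 'a set topology) = all_ideals" by (rule Z_topspace)
    from X show ?thesis
    proof
      assume "X \<in> {U. openin ideal_zariski U \<and> compactin ideal_zariski U}"
      then have "openin ideal_zariski X" by blast
      from openin_subset[OF this] show ?thesis unfolding t .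
    next
      assume "X \<in> {topspace ideal_zariski - U | U. openin ideal_zariski U \<and> compactin ideal_zariski U}"
      then obtain U where "X = topspace ideal_zariski - U" by blast
      then show ?thesis unfolding t by blast
    qed
  qed
  then have "\<Union>(Sc :: 'a set set set) \<subseteq> all_ideals" by blast
  ultimately show ?thesis unfolding constructible_topology_def topology_generated_by_topspace by blast
qed

lemma C_B: "openin (constructible_topology ideal_zariski) {I \<in> all_ideals. (x::'a::comm_ring_1) \<in> I}"
proof -
  have "{I \<in> all_ideals. x \<in> I} \<in> (Sc :: 'a set set set)"
    using Z_B_open[of x] Z_compact[of x] by blast
  then show ?thesis unfolding constructible_topology_def by (rule topology_generated_by_Basis)
qed

lemma C_Bc: "openin (constructible_topology ideal_zariski) (all_ideals - {I \<in> all_ideals. (x::'a::comm_ring_1) \<in> I})"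
proof -
  have "topspace ideal_zariski - {I \<in> all_ideals. x \<in> I} \<in> (Sc :: 'a set set set)"
    using Z_B_open[of x] Z_compact[of x] by blast
  then have "all_ideals - {I \<in> all_ideals. x \<in> I} \<in> (Sc :: 'a set set set)"
    unfolding Z_topspace .
  then show ?thesis unfolding constructible_topology_def by (rule topology_generated_by_Basis)
qed

lemma prime_prod:
  assumes Q: "prime_ideal Q" and A: "finite A" and f: "\<forall>x\<in>A. f x \<notin> Q"
  shows "prod f A \<notin> Q"
  using A f
proof (induction A rule: finite_induct)
  case empty then show ?case using Q ideal_one unfolding prime_ideal_def by auto
next
  case (insert x F) then show ?case using Q unfolding prime_ideal_def by auto
qed




lemma compact_avoid:
  fixes Q :: "'a::comm_ring_1 set"
  assumes W: "openin ideal_zariski W" "compactin ideal_zariski W" and Q: "prime_ideal Q" and QW: "Q \<notin> W"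
  shows "\<exists>y. y \<notin> Q \<and> (\<forall>I\<in>W. y \<in> I)"
proof -
  define g where "g = (\<lambda>F::'a set. {I \<in> all_ideals. F \<subseteq> I})"
  define AA where "AA = {F. finite F \<and> g F \<subseteq> W}"
  have cover: "W \<subseteq> \<Union>(g ` AA)"
  proof
    fix I assume IW: "I \<in> W"
    obtain F where F: "finite F" "F \<subseteq> I" "{J \<in> all_ideals. F \<subseteq> J} \<subseteq> W"
      using Z_local[OF W(1) IW] by (elim exE conjE)
    have "I \<in> all_ideals" using IW openin_subset[OF W(1)] unfolding Z_topspace by blast
    then have "I \<in> g F" unfolding g_def using F(2) by simp
    moreover have "F \<in> AA" unfolding AA_def g_def using F(1,3) by simp
    ultimately show "I \<in> \<Union>(g ` AA)" by (rule UN_I[rotated])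
  qed
  have opens: "\<forall>U\<in>g ` AA. openin ideal_zariski U"
  proof
    fix U assume "U \<in> g ` AA"
    then obtain F where "F \<in> AA" "U = g F" by (rule imageE)
    then show "openin ideal_zariski U" unfolding AA_def g_def by (auto intro: Z_basic)
  qed
  have cp: "\<exists>\<F>. finite \<F> \<and> \<F> \<subseteq> g ` AA \<and> W \<subseteq> \<Union>\<F>"
    using W(2) opens cover unfolding compactin_def by (elim conjE allE[of _ "g ` AA"]) simp
  then obtain FF where F: "finite FF" "FF \<subseteq> g ` AA" "W \<subseteq> \<Union>FF" by (elim exE conjE)
  obtain A where A: "A \<subseteq> AA" "finite A" "FF = g ` A" using finite_subset_image[OF F(1) F(2)] by (elim exE conjE)
  have Qall: "Q \<in> all_ideals" using Q unfolding prime_ideal_def all_ideals_def by simp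
  have nq: "\<exists>z. z \<in> F \<and> z \<notin> Q" if FA: "F \<in> A" for F
  proof (rule ccontr)
    assume "\<not> ?thesis"
    then have "F \<subseteq> Q" by auto
    then have "Q \<in> g F" using Qall unfolding g_def by simp
    moreover have "g F \<subseteq> W" using FA A(1) unfolding AA_def by auto
    ultimately show False using QW by auto
  qed
  define f where "f F = (SOME z. z \<in> F \<and> z \<notin> Q)" for F
  have f: "f F \<in> F \<and> f F \<notin> Q" if "F \<in> A" for F
    unfolding f_def using someI_ex[OF nq[OF that]] .
  have "prod f A \<notin> Q" using prime_prod[OF Q A(2)] f by auto
  moreover have "\<forall>I\<in>W. prod f A \<in> I"
  proof
    fix I assume "I \<in> W"
    then have "I \<in> \<Union>(g ` A)" using F(3) A(3) by auto
    then obtain F where FA: "F \<in> A" "I \<in> g F" by auto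
    then have "f F \<in> I" "ring_ideal I" using f[OF FA(1)] unfolding g_def all_ideals_def by auto
    moreover have "f F dvd prod f A" using A(2) FA(1) by (rule dvd_prodI)
    ultimately show "prod f A \<in> I" using ideal_dvd by blast
  qed
  ultimately show ?thesis by blast
qed



lemma primary_of_ideal: "I \<in> primary_ideals_of P \<Longrightarrow> I \<in> all_ideals"
  unfolding primary_ideals_of_def primary_ideal_def all_ideals_def by blast

lemma Q_nbhd:
  assumes vd: "valuation_domain TYPE('a::idom)" and Q: "prime_ideal (Q::'a set)" and QP: "Q \<subset> P"
    and T: "generate_topology_on Sc T" and QT: "Q \<in> T"
  shows "\<exists>y. y \<notin> Q \<and> (\<forall>I \<in> primary_ideals_of P. y \<notin> I \<longrightarrow> I \<in> T)"
  using T QT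
proof (induction)
  case Empty then show ?case by simp
next
  case (Int a b)
  have Qa: "Q \<in> a" and Qb: "Q \<in> b" using Int.prems by auto
  obtain y1 where y1: "y1 \<notin> Q" "\<forall>I \<in> primary_ideals_of P. y1 \<notin> I \<longrightarrow> I \<in> a"
    using Int.IH(1)[OF Qa] by (elim exE conjE)
  obtain y2 where y2: "y2 \<notin> Q" "\<forall>I \<in> primary_ideals_of P. y2 \<notin> I \<longrightarrow> I \<in> b"
    using Int.IH(2)[OF Qb] by (elim exE conjE)
  have "y1 * y2 \<notin> Q" using y1 y2 Q unfolding prime_ideal_def by blast
  moreover have "I \<in> a \<inter> b" if "I \<in> primary_ideals_of P" "y1 * y2 \<notin> I" for I
  proof -
    have "ring_ideal I" using primary_of_ideal[OF that(1)] unfolding all_ideals_def by blast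
    then have "y1 \<notin> I" "y2 \<notin> I" using that(2) ideal_multR ideal_multL by blast+
    then show ?thesis using y1 y2 that(1) by blast
  qed
  ultimately show ?case by blast
next
  case (UN K)
  then obtain k where k: "k \<in> K" "Q \<in> k" by blast
  obtain y where y: "y \<notin> Q" "\<forall>I \<in> primary_ideals_of P. y \<notin> I \<longrightarrow> I \<in> k"
    using UN.IH[OF k] by (elim exE conjE)
  then show ?case using k(1) by blast
next
  case (Basis s)
  have Qid: "ring_ideal Q" using Q unfolding prime_ideal_def by blast
  show ?case using Basis(1)
  proof
    assume s: "s \<in> {U. openin ideal_zariski U \<and> compactin ideal_zariski U}"
    have so: "openin ideal_zariski s" using s by blast
    have "I \<in> s" if "I \<in> primary_ideals_of P" for I
      by (rule Z_up[OF so Basis(2) primary_of_ideal[OF that] primary_contains_Q[OF vd Q QP that]])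
    moreover have "(1::'a) \<notin> Q" using Q ideal_one unfolding prime_ideal_def by blast
    ultimately show ?thesis by blast
  next
    assume "s \<in> {topspace ideal_zariski - U | U. openin ideal_zariski U \<and> compactin ideal_zariski U}"
    then obtain W where W: "openin ideal_zariski W" "compactin ideal_zariski W" "s = topspace ideal_zariski - W"
      by blast
    have "Q \<notin> W" using Basis(2) W(3) by auto
    then obtain y where y: "y \<notin> Q" "\<forall>I\<in>W. y \<in> I" using compact_avoid[OF W(1,2) Q] by blast
    have "I \<in> s" if "I \<in> primary_ideals_of P" "y \<notin> I" for I
    proof -
      have "I \<notin> W" using y(2) that(2) by blast
      moreover have "I \<in> topspace ideal_zariski" unfolding Z_topspace by (rule primary_of_ideal[OF that(1)])
      ultimately show ?thesis unfolding W(3) by blast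
    qed
    then show ?thesis using y by blast
  qed
qed




theorem proposition5p6:
  assumes "valuation_domain TYPE('a::idom)"
  shows "(\<forall>P Q :: 'a set. branched_prime P \<longrightarrow> prime_ideal Q \<longrightarrow> Q \<subset> P \<longrightarrow>
            \<not> (\<exists>R. prime_ideal R \<and> Q \<subset> R \<and> R \<subset> P) \<longrightarrow>
            constructible_topology ideal_zariski closure_of primary_ideals_of P
              = primary_ideals_of P \<union> {Q})
       \<and> closedin (constructible_topology ideal_zariski) {I :: 'a set. primary_ideal I}"
proof -
  note vd = assms
  let ?C = "constructible_topology (ideal_zariski :: 'a set topology)"
  have nbhd: "\<exists>T. openin ?C T \<and> J \<in> T \<and> (\<forall>I\<in>T. \<not> primary_ideal I)"
    if J: "J \<in> all_ideals" "J \<noteq> UNIV" "\<not> primary_ideal J" for J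
  proof -
    have Jid: "ring_ideal J" using J unfolding all_ideals_def by blast
    obtain a b where ab: "a * b \<in> J" "a \<notin> J" "\<forall>I. primary_ideal I \<longrightarrow> a * b \<in> I \<longrightarrow> a \<in> I"
      using nonprimary_nbhd[OF vd Jid J(2,3)] by blast
    let ?T = "{I \<in> all_ideals. a * b \<in> I} \<inter> (all_ideals - {I \<in> all_ideals. a \<in> I})"
    have "openin ?C ?T" by (rule openin_Int[OF C_B C_Bc])
    moreover have "J \<in> ?T" using J ab by blast
    moreover have "\<forall>I\<in>?T. \<not> primary_ideal I" using ab by blast
    ultimately show ?thesis by blast
  qed
  have part1: "\<forall>P Q :: 'a set. branched_prime P \<longrightarrow> prime_ideal Q \<longrightarrow> Q \<subset> P \<longrightarrow>
            \<not> (\<exists>R. prime_ideal R \<and> Q \<subset> R \<and> R \<subset> P) \<longrightarrow>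
            ?C closure_of primary_ideals_of P = primary_ideals_of P \<union> {Q}"
  proof (intro allI impI)
    fix P Q :: "'a set"
    assume br: "branched_prime P" and Q: "prime_ideal Q" and QP: "Q \<subset> P"
      and nomid: "\<not> (\<exists>R. prime_ideal R \<and> Q \<subset> R \<and> R \<subset> P)"
    have P: "prime_ideal P" using br unfolding branched_prime_def by blast
    have sub: "primary_ideals_of P \<subseteq> all_ideals" using primary_of_ideal by blast
    show "?C closure_of primary_ideals_of P = primary_ideals_of P \<union> {Q}"
    proof
      show "?C closure_of primary_ideals_of P \<subseteq> primary_ideals_of P \<union> {Q}"
      proof
        fix J assume J: "J \<in> ?C closure_of primary_ideals_of P"
        then have Jall: "J \<in> all_ideals"
          and nb: "\<And>T. J \<in> T \<Longrightarrow> openin ?C T \<Longrightarrow> \<exists>I. I \<in> primary_ideals_of P \<and> I \<in> T"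
          unfolding in_closure_of C_topspace by blast+
        have Jid: "ring_ideal J" using Jall unfolding all_ideals_def by blast
        show "J \<in> primary_ideals_of P \<union> {Q}"
        proof (rule ccontr)
          assume nJ: "J \<notin> primary_ideals_of P \<union> {Q}"
          consider (a) "\<not> Q \<subseteq> J" | (b) "\<not> J \<subseteq> P" | (c) "Q \<subseteq> J" "J \<subseteq> P" by blast
          then show False
          proof cases
            case a
            then obtain q where q: "q \<in> Q" "q \<notin> J" by blast
            have "J \<in> all_ideals - {I \<in> all_ideals. q \<in> I}" using Jall q by blast
            then obtain I where I: "I \<in> primary_ideals_of P" "I \<in> all_ideals - {I \<in> all_ideals. q \<in> I}"
              using nb[OF _ C_Bc] by blast
            then show False using primary_contains_Q[OF vd Q QP I(1)] q by blast
          next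
            case b
            then obtain z where z: "z \<in> J" "z \<notin> P" by blast
            have "J \<in> {I \<in> all_ideals. z \<in> I}" using Jall z by blast
            then obtain I where I: "I \<in> primary_ideals_of P" "I \<in> {I \<in> all_ideals. z \<in> I}"
              using nb[OF _ C_B] by blast
            then have "z \<in> ideal_radical I" using subset_rad by blast
            moreover have "ideal_radical I = P" using I(1) unfolding primary_ideals_of_def by simp
            ultimately show False using z by simp
          next
            case c
            have JU: "J \<noteq> UNIV" using c P unfolding prime_ideal_def by blast
            define R where "R = ideal_radical J"
            have R: "prime_ideal R" unfolding R_def by (rule rad_prime[OF vd Jid JU])
            have JR: "J \<subseteq> R" unfolding R_def by (rule subset_rad)
            have RP: "R \<subseteq> P" unfolding R_def ideal_radical_def using c prime_pow[OF P] by blast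
            have QR: "Q \<subset> R"
            proof -
              have "Q \<noteq> J" using nJ by blast
              then have "Q \<subset> J" using c by blast
              then show ?thesis using JR by blast
            qed
            have "R = P" using nomid R QR RP by blast
            then have "\<not> primary_ideal J" using nJ unfolding primary_ideals_of_def R_def by auto
            then obtain T where T: "openin ?C T" "J \<in> T" "\<forall>I\<in>T. \<not> primary_ideal I"
              using nbhd Jall JU by blast
            then obtain I where "I \<in> primary_ideals_of P" "I \<in> T" using nb[OF T(2) T(1)] by blast
            then show False using T(3) unfolding primary_ideals_of_def by blast
          qed
        qed
      qed
    next
      have "primary_ideals_of P \<subseteq> ?C closure_of primary_ideals_of P"
        using sub by (intro closure_of_subset) (simp add: C_topspace)
      moreover have "Q \<in> ?C closure_of primary_ideals_of P"
        unfolding in_closure_of C_topspace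
      proof (intro conjI allI impI)
        show "Q \<in> all_ideals" using Q unfolding prime_ideal_def all_ideals_def by blast
      next
        fix T assume T: "Q \<in> T \<and> openin ?C T"
        then have "generate_topology_on Sc T" using C_open by blast
        then obtain y where y: "y \<notin> Q" "\<forall>I \<in> primary_ideals_of P. y \<notin> I \<longrightarrow> I \<in> T"
          using Q_nbhd[OF vd Q QP] T by blast
        obtain I where "I \<in> primary_ideals_of P" "y \<notin> I"
          using primary_avoiding[OF vd P Q QP nomid y(1)] by blast
        then show "\<exists>I. I \<in> primary_ideals_of P \<and> I \<in> T" using y by blast
      qed
      ultimately show "primary_ideals_of P \<union> {Q} \<subseteq> ?C closure_of primary_ideals_of P" by blast
    qed
  qed
  have part2: "closedin ?C {I :: 'a set. primary_ideal I}"
    unfolding closedin_def C_topspace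
  proof
    show "{I. primary_ideal I} \<subseteq> all_ideals" unfolding primary_ideal_def all_ideals_def by blast
  next
    show "openin ?C (all_ideals - {I. primary_ideal I})"
    proof (subst openin_subopen, intro ballI)
      fix J :: "'a set" assume J: "J \<in> all_ideals - {I. primary_ideal I}"
      show "\<exists>T. openin ?C T \<and> J \<in> T \<and> T \<subseteq> all_ideals - {I. primary_ideal I}"
      proof (cases "J = UNIV")
        case True
        let ?T = "{I \<in> all_ideals. (1::'a) \<in> I}"
        have "J \<in> ?T" using J True by blast
        moreover have "?T \<subseteq> all_ideals - {I. primary_ideal I}"
          using ideal_one unfolding primary_ideal_def all_ideals_def by blast
        ultimately show ?thesis using C_B by blast
      next
        case False
        then obtain T where "openin ?C T" "J \<in> T" "\<forall>I\<in>T. \<not> primary_ideal I"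
          using nbhd J by blast
        moreover have "T \<subseteq> all_ideals" using openin_subset[OF \<open>openin ?C T\<close>] C_topspace by blast
        ultimately show ?thesis by blast
      qed
    qed
  qed
  show ?thesis using part1 part2 by blast
qed


end
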